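(* Let $A_n=1$ if $n=2^{k+1}-2$ for some integer $k\ge0$ and $A_n=0$ otherwise, and let $D(n)=\det\left(A_{i+j}\right)_{i,j=0}^{n-1}$ for $n\ge1$, $D(0)=1$. Let $k>0$. Then $$D(2^{k+1}+n)=-D(n)\quad\text{for }0\le n<2^k,\qquad D(2^{k+1}+n)=D(n)\quad\text{for }2^k\le n<2^{k+1}.$$ *)

theory Defs
  imports "Jordan_Normal_Form.Determinant"
begin

definition A :: "nat \<Rightarrow> int" where
  "A n = (if \<exists>k::nat. n = 2^(k+1) - 2 then 1 else 0)"

definition D :: "nat \<Rightarrow> int" where
  "D n = (if n = 0 then 1 else det (mat n n (\<lambda>(i,j). A (i + j))))"

end

theory Submission
  imports Defs
begin

definition gi :: "nat \<Rightarrow> nat \<Rightarrow> nat \<Rightarrow> nat" where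
  "gi m d i = (if i < m then i else i + d)"

definition G :: "nat \<Rightarrow> nat \<Rightarrow> nat \<Rightarrow> int mat" where
  "G m d s = mat s s (\<lambda>(i,j). A (gi m d i + gi m d j))"

lemma D_det: "D n = det (mat n n (\<lambda>(i,j). A (i + j)))"
proof (cases "n = 0")
  case True
  then show ?thesis by (simp add: D_def det_def)
qed (simp add: D_def)

lemma det_single_row:
  fixes M :: "int mat"
  assumes M: "M \<in> carrier_mat (Suc s) (Suc s)" and c: "c < Suc s"
    and z: "\<And>j. j < Suc s \<Longrightarrow> j \<noteq> c \<Longrightarrow> M $$ (s,j) = 0" and o: "M $$ (s,c) = 1"
  shows "det M = (-1)^(s+c) * det (mat_delete M s c)"
proof -
  have "det M = (\<Sum>j<Suc s. M $$ (s,j) * cofactor M s j)"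
    by (rule laplace_expansion_row[OF M], simp)
  also have "\<dots> = (\<Sum>j\<in>{c}. M $$ (s,j) * cofactor M s j)"
    by (rule sum.mono_neutral_right) (use c z in auto)
  finally show ?thesis using o by (simp add: cofactor_def)
qed

lemma det_single_col:
  fixes M :: "int mat"
  assumes M: "M \<in> carrier_mat (Suc s) (Suc s)" and c: "c < Suc s"
    and z: "\<And>i. i < Suc s \<Longrightarrow> i \<noteq> c \<Longrightarrow> M $$ (i,s) = 0" and o: "M $$ (c,s) = 1"
  shows "det M = (-1)^(c+s) * det (mat_delete M c s)"
proof -
  have "det M = (\<Sum>i<Suc s. M $$ (i,s) * cofactor M i s)"
    by (rule laplace_expansion_column[OF M], simp)
  also have "\<dots> = (\<Sum>i\<in>{c}. M $$ (i,s) * cofactor M i s)"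
    by (rule sum.mono_neutral_right) (use c z in auto)
  finally show ?thesis using o by (simp add: cofactor_def)
qed

lemma A_range:
  assumes j: "j \<ge> 1" and N: "N = (2::nat)^j" and x1: "N - 1 \<le> x" and x2: "x \<le> 4*N - 3"
  shows "A x = (if x = 2*N - 2 then 1 else 0)"
proof (cases "x = 2*N - 2")
  case True
  have "x = 2^(j+1) - 2" using True N by simp
  then show ?thesis using True unfolding A_def by auto
next
  case False
  have "\<not> (\<exists>k::nat. x = 2^(k+1) - 2)"
  proof
    assume "\<exists>k::nat. x = 2^(k+1) - 2"
    then obtain k :: nat where k: "x = 2^(k+1) - 2" by blast
    have "(2::nat)^1 \<le> 2^(k+1)" by (rule power_increasing) auto
    hence p1: "(2::nat)^(k+1) \<ge> 2" by simp
    have Np: "N \<ge> 2" using j N by (metis one_le_numeral power_increasing power_one_right)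
    have "N < (2::nat)^(k+1)" using k x1 Np p1 by linarith
    hence "2^j < (2::nat)^(k+1)" by (simp only: N)
    hence a: "j < k+1" by (simp only: power_strict_increasing_iff[of "2::nat"] one_less_numeral_iff semiring_norm(76))
    have "(2::nat)^(k+1) < 4*N" using k x2 Np p1 by linarith
    moreover have "4*N = (2::nat)^(j+2)" unfolding N by (simp add: power_add)
    ultimately have "(2::nat)^(k+1) < 2^(j+2)" by simp
    hence b: "k+1 < j+2" by (simp only: power_strict_increasing_iff[of "2::nat"] one_less_numeral_iff semiring_norm(76))
    have kj: "k = j" using a b by simp
    have "2*N - 2 = 2^(j+1) - (2::nat)" unfolding N by simp
    hence "x = 2*N - 2" using k kj by simp
    thus False using False by simp
  qed
  then show ?thesis using False unfolding A_def by auto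
qed

lemma G_carrier: "G m d s \<in> carrier_mat s s" by (simp add: G_def)

lemma G_base:
  assumes j: "j \<ge> 1" and N: "N = (2::nat)^j" and mn: "m + n + 1 = N"
  shows "det (G m n (Suc m)) = D m"
proof -
  have Np: "N \<ge> 2" using j N by (metis one_le_numeral power_increasing power_one_right)
  have row: "G m n (Suc m) $$ (m, jj) = (if jj = m then 1 else 0)" if "jj < Suc m" for jj
  proof -
    have "G m n (Suc m) $$ (m, jj) = A (gi m n m + gi m n jj)" using that by (simp add: G_def)
    also have "\<dots> = (if gi m n m + gi m n jj = 2*N - 2 then 1 else 0)"
      by (rule A_range[OF j N]) (use that mn in \<open>auto simp: gi_def\<close>)
    also have "\<dots> = (if jj = m then 1 else 0)" using that mn Np by (auto simp: gi_def)
    finally show ?thesis .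
  qed
  have "det (G m n (Suc m)) = (-1)^(m+m) * det (mat_delete (G m n (Suc m)) m m)"
    by (rule det_single_row[OF G_carrier]) (use row in auto)
  also have "mat_delete (G m n (Suc m)) m m = mat m m (\<lambda>(i,j). A (i + j))"
    by (rule eq_matI) (auto simp: mat_delete_def G_def gi_def)
  finally show ?thesis by (simp add: D_det)
qed

lemma G_step:
  assumes j: "j \<ge> 1" and N: "N = (2::nat)^j" and mn: "m + d + r + 2 = N"
  shows "det (G m d (Suc (Suc (m+2*r+1)))) = - det (G m (Suc d) (m+2*r+1))"
proof -
  define s where "s = m + 2*r + 1"
  define M where "M = G m d (Suc (Suc s))"
  have Np: "N \<ge> 2" using j N by (metis one_le_numeral power_increasing power_one_right)
  have gen: "A (gi m d (Suc s) + gi m d jj) = (if jj = m then 1 else 0)" if "jj < Suc (Suc s)" for jj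
  proof -
    have "A (gi m d (Suc s) + gi m d jj) = (if gi m d (Suc s) + gi m d jj = 2*N - 2 then 1 else 0)"
      by (rule A_range[OF j N]) (use that mn Np in \<open>auto simp: gi_def s_def\<close>)
    also have "\<dots> = (if jj = m then 1 else 0)" using that mn Np by (auto simp: gi_def s_def)
    finally show ?thesis .
  qed
  have "det M = (-1)^(Suc s + m) * det (mat_delete M (Suc s) m)"
    by (rule det_single_row) (use gen in \<open>auto simp: M_def G_def s_def\<close>)
  also have "det (mat_delete M (Suc s) m) = (-1)^(m + s) * det (mat_delete (mat_delete M (Suc s) m) m s)"
  proof (rule det_single_col)
    show "mat_delete M (Suc s) m \<in> carrier_mat (Suc s) (Suc s)"
      by (simp add: M_def G_def mat_delete_def)
  qed (use gen in \<open>auto simp: M_def G_def s_def mat_delete_def add.commute\<close>)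
  also have "mat_delete (mat_delete M (Suc s) m) m s = G m (Suc d) s"
    by (rule eq_matI) (auto simp: mat_delete_def M_def G_def gi_def)
  finally have "det M = (-1)^(Suc s + m) * (-1)^(m+s) * det (G m (Suc d) s)" by simp
  also have "(-1::int)^(Suc s + m) * (-1)^(m+s) = -1"
    by (simp add: power_add[symmetric] add.commute)
  finally show ?thesis by (simp add: M_def s_def)
qed

lemma G_iter:
  assumes j: "j \<ge> 1" and N: "N = (2::nat)^j" and mn: "m + n + 1 = N"
  shows "r \<le> n \<Longrightarrow> det (G m (n-r) (m+2*r+1)) = (-1)^r * D m"
proof (induction r)
  case 0
  then show ?case using G_base[OF j N mn] by simp
next
  case (Suc r)
  have e: "m + (n - Suc r) + r + 2 = N" using Suc.prems mn by simp
  have "det (G m (n - Suc r) (m + 2 * Suc r + 1)) = det (G m (n - Suc r) (Suc (Suc (m+2*r+1))))"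
    by simp
  also have "\<dots> = - det (G m (Suc (n - Suc r)) (m+2*r+1))" by (rule G_step[OF j N e])
  also have "Suc (n - Suc r) = n - r" using Suc.prems by simp
  finally show ?case using Suc by simp
qed

lemma key:
  assumes j: "j \<ge> 1" and N: "N = (2::nat)^j" and n: "n < N"
  shows "D (N + n) = (-1)^n * D (N - 1 - n)"
proof -
  define m where "m = N - 1 - n"
  have mn: "m + n + 1 = N" using n m_def by simp
  have "det (G m (n-n) (m+2*n+1)) = (-1)^n * D m" by (rule G_iter[OF j N mn]) simp
  moreover have "G m (n-n) (m+2*n+1) = mat (N+n) (N+n) (\<lambda>(i,j). A (i + j))"
    using mn by (auto simp: G_def gi_def)
  ultimately show ?thesis by (simp add: D_det m_def)
qed

theorem corollary2p3:
  fixes k :: nat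
  assumes "k > 0"
  shows "(\<forall>n. n < 2^k \<longrightarrow> D (2^(k+1) + n) = - D n)
       \<and> (\<forall>n. 2^k \<le> n \<and> n < 2^(k+1) \<longrightarrow> D (2^(k+1) + n) = D n)"
proof -
  define M :: nat where "M = 2^k"
  have M2: "(2::nat)^(k+1) = 2*M" by (simp add: M_def)
  have ev: "even M" using assms by (simp add: M_def)
  have k1: "k+1 \<ge> 1" "k \<ge> 1" using assms by auto
  have big: "D (2*M + n) = (-1)^n * D (2*M - 1 - n)" if "n < 2*M" for n
    using key[OF k1(1) M2[symmetric] that] .
  have small: "D (M + n) = (-1)^n * D (M - 1 - n)" if "n < M" for n
    using key[OF k1(2) M_def that] .
  have sq: "(-1::int)^a * (-1)^a = 1" for a
  proof -
    have "(-1::int)^a * (-1)^a = ((-1) * (-1))^a" by (rule power_mult_distrib[symmetric])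
    thus ?thesis by simp
  qed
  have P1: "D (2*M + n) = - D n" if n: "n < M" for n
  proof -
    have e: "2*M - 1 - n = M + (M - 1 - n)" using n by simp
    have "D (2*M + n) = (-1)^n * D (M + (M - 1 - n))" using big[of n] n e by simp
    also have "\<dots> = (-1)^n * ((-1)^(M-1-n) * D n)" using small[of "M-1-n"] n
      by (simp add: diff_diff_left)
    finally have h: "D (2*M + n) = ((-1)^n * (-1)^(M-1-n)) * D n" by simp
    have nn: "n + (M-1-n) = M-1" using n by simp
    have "(-1::int)^n * (-1)^(M-1-n) = (-1)^(M-1)" by (metis nn power_add)
    also have "odd (M-1)" using ev n by simp
    hence "(-1::int)^(M-1) = -1" by (rule neg_one_odd_power)
    finally show ?thesis using h by simp
  qed
  have P2: "D (2*M + n) = D n" if n: "M \<le> n" "n < 2*M" for n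
  proof -
    define t where "t = n - M"
    have t: "n = M + t" "t < M" using n t_def by auto
    have e: "2*M - 1 - n = M - 1 - t" using t by simp
    have "D n = (-1)^t * D (M - 1 - t)" using small[of t] t by simp
    hence "(-1)^t * D n = ((-1)^t * (-1)^t) * D (M - 1 - t)" by (simp only: mult.assoc)
    hence "D (M - 1 - t) = (-1)^t * D n" using sq[of t] by simp
    hence h: "D (2*M + n) = ((-1)^n * (-1)^t) * D n" using big[of n] n e by simp
    have "(-1::int)^n * (-1)^t = (-1)^(n+t)" by (rule power_add[symmetric])
    also have "even (n+t)" using t ev by simp
    hence "(-1::int)^(n+t) = 1" by (rule neg_one_even_power)
    finally have "(-1::int)^n * (-1)^t = 1" .
    thus ?thesis using h by simp
  qed
  show ?thesis
  proof (intro conjI allI impI)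
    fix n :: nat assume "n < 2^k"
    hence "n < M" using M_def by argo
    hence "D (2*M + n) = - D n" by (rule P1)
    thus "D (2^(k+1) + n) = - D n" using M2 by argo
  next
    fix n :: nat assume h: "2^k \<le> n \<and> n < 2^(k+1)"
    hence "M \<le> n" "n < 2*M" using M_def M2 by argo+
    hence "D (2*M + n) = D n" by (rule P2)
    thus "D (2^(k+1) + n) = D n" using M2 by argo
  qed
qed

end
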